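(* For $j\in\{0,1,2,3\}$ let $$\mathcal{F}_j(\tau)=\sum_{\Delta\ge0}c\Big(\frac{\Delta+j^2}{8},j\Big)q^{\Delta/8},$$ where $c(n,r)=0$ unless $n\in\mathbb{N}_0$, in which case $c(n,r)=\sum_{d\mid\gcd(n,r,2),\,d>0}d\,H\big(\frac{8n-r^2}{d^2}\big)$. Define $\beta_0(n),\beta_1(n)$ by $\frac{4800}{\eta(\tau)^6}\mathcal{F}_j(\tau)=\sum_{n\ge0}\beta_j(n)q^{n-\alpha_j}$ with $\alpha_0=\frac14$, $\alpha_1=\frac38$; let $\mathcal{H}_1(\tau)=\sum_{n\ge0}H(4n+3)q^{n+\frac34}$ and define $\gamma(n)$ by $\frac{4800}{\eta(\tau)^6}\mathcal{H}_1(\tau)=\sum_{n\ge0}\gamma(n)q^{n-\frac12}$; and let $p_6(n)$ be defined by $\sum_{n\ge0}p_6(n)q^n=\prod_{\ell\ge1}(1-q^\ell)^{-6}$. Then for all integers $n\ge0$, $$-\beta_0(n)\le1200\,p_6(n),\qquad \beta_1(n)\le\gamma(2n).$$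
   Context: $q=e^{2\pi i\tau}$, $\eta(\tau)=q^{1/24}\prod_{n\ge1}(1-q^n)$. For an integer $N$, $H(N)$ is the Hurwitz–Kronecker class number: $H(0)=-1/12$; $H(N)=0$ if $N<0$ or $N\equiv1,2\pmod4$; for $N>0$, $N\equiv0,3\pmod4$, $H(N)$ is the number of $\mathrm{SL}_2(\mathbb{Z})$-classes of positive definite integral binary quadratic forms of discriminant $-N$, classes of forms equivalent to a multiple of $x^2+y^2$ (resp. $x^2+xy+y^2$) weighted by $1/2$ (resp. $1/3$). $p_6(n)$ is the number of partitions of $n$ into parts of $6$ colors. *)

theory Defs
  imports "HOL-Computational_Algebra.Computational_Algebra"
begin

text \<open>Binary quadratic forms a x^2 + b x y + c y^2 as triples (a,b,c).
  Action of gamma = (p q; r s) in SL2(Z): f(x,y) maps to f(p x + q y, r x + s y).\<close>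

type_synonym qform = "int \<times> int \<times> int"

definition qform_act :: "int \<Rightarrow> int \<Rightarrow> int \<Rightarrow> int \<Rightarrow> qform \<Rightarrow> qform" where
  "qform_act p q r s f = (case f of (a, b, c) \<Rightarrow>
     (a*p^2 + b*p*r + c*r^2, 2*a*p*q + b*(p*s + q*r) + 2*c*r*s, a*q^2 + b*q*s + c*s^2))"

definition qform_equiv :: "qform \<Rightarrow> qform \<Rightarrow> bool" where
  "qform_equiv f g \<longleftrightarrow> (\<exists>p q r s. p*s - q*r = 1 \<and> g = qform_act p q r s f)"

definition posdef_forms :: "int \<Rightarrow> qform set" where
  "posdef_forms N = {(a, b, c). a > 0 \<and> b^2 - 4*a*c = -N}"

definition form_classes :: "int \<Rightarrow> qform set set" where
  "form_classes N = (\<lambda>f. {g \<in> posdef_forms N. qform_equiv f g}) ` posdef_forms N"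

definition class_weight :: "qform set \<Rightarrow> real" where
  "class_weight C =
     (if \<exists>k>0. (k, 0, k) \<in> C then 1/2
      else if \<exists>k>0. (k, k, k) \<in> C then 1/3 else 1)"

definition hurwitz :: "int \<Rightarrow> real" where
  "hurwitz N =
     (if N = 0 then -1/12
      else if N < 0 \<or> N mod 4 = 1 \<or> N mod 4 = 2 then 0
      else (\<Sum>C\<in>form_classes N. class_weight C))"

text \<open>c(n,r) = 0 unless n is a nonnegative integer; otherwise
  sum over positive d dividing gcd(n,r,2) of d * H((8n - r^2)/d^2).
  (For such d the quotient is always an integer.)\<close>
definition cc :: "rat \<Rightarrow> int \<Rightarrow> real" where
  "cc n r =
     (if n \<in> \<nat> then
        (let m = \<lfloor>n\<rfloor> in
         \<Sum>d\<in>{d::int. d > 0 \<and> d dvd gcd (gcd m r) 2}.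
            of_int d * hurwitz ((8*m - r^2) div d^2))
      else 0)"

section \<open>q-series as formal Laurent series in X = q^(1/8)\<close>

definition FF :: "int \<Rightarrow> real fls" where
  "FF j = fps_to_fls (Abs_fps (\<lambda>\<Delta>. cc ((of_nat \<Delta> + of_int (j^2)) / 8) j))"

text \<open>H_1(tau) = sum_{n >= 0} H(4n+3) q^(n + 3/4), i.e. exponent 8n+6 in X.\<close>
definition HH1 :: "real fls" where
  "HH1 = fps_to_fls (Abs_fps (\<lambda>k. if k mod 8 = 6 then hurwitz (4 * int (k div 8) + 3) else 0))"

text \<open>eta(tau)^6 = q^(1/4) prod_{n>=1} (1 - q^n)^6. The coefficient of q^n of the
  infinite product equals that of the finite product over 1..n.\<close>
definition euler6 :: "real fps" where
  "euler6 = Abs_fps (\<lambda>n. fps_nth (\<Prod>l\<in>{1..n}. (1 - fps_X ^ l) ^ 6) n)"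

definition eta6 :: "real fls" where
  "eta6 = fls_shift (-2) (fps_to_fls (Abs_fps (\<lambda>k. if 8 dvd k then fps_nth euler6 (k div 8) else 0)))"

definition beta0 :: "nat \<Rightarrow> real" where
  "beta0 n = fls_nth (4800 * inverse eta6 * FF 0) (8 * int n - 2)"

definition beta1 :: "nat \<Rightarrow> real" where
  "beta1 n = fls_nth (4800 * inverse eta6 * FF 1) (8 * int n - 3)"

definition gamma_coef :: "nat \<Rightarrow> real" where
  "gamma_coef n = fls_nth (4800 * inverse eta6 * HH1) (8 * int n - 4)"

text \<open>A 6-coloured partition of n: a multiplicity f l c for each part size l >= 1
  and colour c < 6, with sum of l * f l c equal to n.\<close>
definition p6 :: "nat \<Rightarrow> nat" where
  "p6 n = card {f :: nat \<Rightarrow> nat \<Rightarrow> nat.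
      (\<forall>l c. f l c \<noteq> 0 \<longrightarrow> 1 \<le> l \<and> l \<le> n \<and> c < 6) \<and>
      (\<Sum>l\<in>{1..n}. \<Sum>c<6. l * f l c) = n}"

end

theory Submission
  imports Defs
begin

lemma rinv_trunc:
  assumes "\<forall>k\<le>n. f $ k = g $ k"
  shows "\<forall>k\<le>n. fps_right_inverse_constructor f a k = fps_right_inverse_constructor g a k"
  using assms
proof (induction n)
  case 0 then show ?case by simp
next
  case (Suc n)
  have IH: "\<forall>k\<le>n. fps_right_inverse_constructor f a k = fps_right_inverse_constructor g a k"
    using Suc by auto
  show ?case
  proof (intro allI impI)
    fix k assume "k \<le> Suc n"
    then consider "k \<le> n" | "k = Suc n" by linarith
    then show "fps_right_inverse_constructor f a k = fps_right_inverse_constructor g a k"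
    proof cases
      case 1 then show ?thesis using IH by blast
    next
      case 2
      have "(\<Sum>i=1..Suc n. f$i * fps_right_inverse_constructor f a (Suc n - i)) =
            (\<Sum>i=1..Suc n. g$i * fps_right_inverse_constructor g a (Suc n - i))"
        by (rule sum.cong) (use IH Suc.prems in auto)
      then show ?thesis using 2 by simp
    qed
  qed
qed

lemma inv_trunc:
  fixes f g :: "'a::field fps"
  assumes "\<forall>k\<le>n. f $ k = g $ k"
  shows "inverse f $ n = inverse g $ n"
proof -
  have "f $ 0 = g $ 0" using assms by auto
  then show ?thesis using rinv_trunc[OF assms, of "inverse (f$0)"] by (simp add: fps_inverse_def)
qed

definition good :: "nat \<Rightarrow> real fps \<Rightarrow> bool" where
  "good m f \<longleftrightarrow> f $ 0 = 1 \<and> (\<forall>j. 0 < j \<longrightarrow> j \<le> m \<longrightarrow> f $ j = 0)"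

lemma good_mult: assumes "good m f" "good m g" shows "good m (f * g)"
  unfolding good_def
proof (intro conjI allI impI)
  show "(f * g) $ 0 = 1" using assms by (simp add: good_def)
  fix j assume j: "0 < j" "j \<le> m"
  have "(f * g) $ j = (\<Sum>i=0..j. f$i * g$(j-i))" by (rule fps_mult_nth)
  also have "\<dots> = 0"
  proof (rule sum.neutral, intro ballI)
    fix i assume "i \<in> {0..j}"
    then show "f$i * g$(j-i) = 0" using assms j unfolding good_def
      by (cases "i = 0") auto
  qed
  finally show "(f * g) $ j = 0" .
qed

lemma good_one: "good m 1" by (simp add: good_def)

lemma good_prod: "(\<And>x. x \<in> A \<Longrightarrow> good m (f x)) \<Longrightarrow> good m (\<Prod>x\<in>A. f x)"
proof (induction A rule: infinite_finite_induct)
  case (infinite A) then show ?case by (simp add: good_one)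
next
  case empty then show ?case by (simp add: good_one)
next
  case (insert x F) then show ?case by (simp add: good_mult)
qed

lemma good_power: "good m f \<Longrightarrow> good m (f ^ k)"
  by (induction k) (simp_all add: good_one good_mult)

lemma good_factor: "m < l \<Longrightarrow> good m (1 - fps_X ^ l)"
  by (auto simp: good_def fps_X_power_nth)

lemma good_mult_nth: assumes "good k R" shows "(f * R) $ k = f $ k"
proof -
  have "(f * R) $ k = (\<Sum>i=0..k. f$i * R$(k-i))" by (rule fps_mult_nth)
  also have "\<dots> = (\<Sum>i=0..k. if i = k then f $ i else 0)"
    by (rule sum.cong) (use assms in \<open>auto simp: good_def\<close>)
  also have "\<dots> = f $ k" by simp
  finally show ?thesis .
qed

definition EE :: "nat \<Rightarrow> real fps" where
  "EE N = (\<Prod>l\<in>{1..N}. (1 - fps_X ^ l) ^ 6)"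

lemma EE_trunc: assumes "k \<le> N" shows "EE N $ k = EE k $ k"
proof -
  have U: "{1..N} = {1..k} \<union> {k+1..N}" using assms by auto
  have D: "{1..k} \<inter> {k+1..N} = {}" by auto
  have "EE N = EE k * (\<Prod>l\<in>{k+1..N}. (1 - fps_X ^ l) ^ 6)"
    unfolding EE_def U by (rule prod.union_disjoint) (simp_all add: D)
  moreover have "good k (\<Prod>l\<in>{k+1..N}. (1 - fps_X ^ l) ^ 6)"
    by (rule good_prod) (auto intro!: good_power good_factor)
  ultimately show ?thesis using good_mult_nth by metis
qed

lemma euler6_nth: "euler6 $ k = EE k $ k"
  unfolding euler6_def EE_def by (rule fps_nth_Abs_fps)

lemma inv_euler6: assumes "k \<le> N" shows "inverse euler6 $ k = inverse (EE N) $ k"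
proof (rule inv_trunc, intro allI impI)
  fix j assume "j \<le> k"
  then have "j \<le> N" using assms by linarith
  then show "euler6 $ j = EE N $ j" using EE_trunc[of j N] euler6_nth[of j] by simp
qed

lemma inv_prod: "inverse (\<Prod>x\<in>A. f x :: real fps) = (\<Prod>x\<in>A. inverse (f x))"
proof (induction A rule: infinite_finite_induct)
  case (insert x F) then show ?case by (simp add: fps_inverse_mult)
qed simp_all

definition AA :: "nat \<Rightarrow> (nat \<times> nat) set" where
  "AA N = {1..N} \<times> {..<6}"

lemma inv_EE: "inverse (EE N) = (\<Prod>x\<in>AA N. inverse (1 - fps_X ^ fst x))"
proof -
  have "inverse (EE N) = (\<Prod>l\<in>{1..N}. (inverse (1 - fps_X ^ l :: real fps)) ^ 6)"
    unfolding EE_def inv_prod by (simp add: fps_inverse_power)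
  also have "\<dots> = (\<Prod>l\<in>{1..N}. \<Prod>c\<in>{..<6::nat}. inverse (1 - fps_X ^ l :: real fps))"
    by simp
  also have "\<dots> = (\<Prod>x\<in>AA N. inverse (1 - fps_X ^ fst x))"
    unfolding AA_def prod.cartesian_product by (simp add: case_prod_beta)
  finally show ?thesis .
qed

lemma geom_nth: assumes "1 \<le> l"
  shows "inverse (1 - fps_X ^ l :: real fps) $ j = (if l dvd j then 1 else 0)"
proof -
  define G :: "real fps" where "G = Abs_fps (\<lambda>j. if l dvd j then 1 else 0)"
  have "(1 - fps_X ^ l) * G = 1"
  proof (rule fps_ext)
    fix j
    have "((1 - fps_X ^ l) * G) $ j = G $ j - (fps_X ^ l * G) $ j"
      by (simp add: algebra_simps)
    also have "\<dots> = (1::real fps) $ j"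
      unfolding fps_X_power_mult_nth G_def using assms
      by (auto simp: dvd_imp_le dvd_minus_self)
    finally show "((1 - fps_X ^ l) * G) $ j = (1::real fps) $ j" .
  qed
  then have "inverse (1 - fps_X ^ l) = G" by (rule fps_inverse_unique)
  then show ?thesis by (simp add: G_def)
qed

definition CC :: "(nat \<times> nat) set \<Rightarrow> nat \<Rightarrow> (nat \<times> nat \<Rightarrow> nat) set" where
  "CC A n = {f. (\<forall>x. x \<notin> A \<longrightarrow> f x = 0) \<and> (\<Sum>x\<in>A. fst x * f x) = n}"

lemma CC_finite:
  assumes "finite A" "\<forall>x\<in>A. 1 \<le> fst x"
  shows "finite (CC A n)"
proof (rule finite_subset)
  show "CC A n \<subseteq> {f. \<forall>x. (x \<in> A \<longrightarrow> f x \<in> {0..n}) \<and> (x \<notin> A \<longrightarrow> f x = 0)}"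
  proof safe
    fix f x assume f: "f \<in> CC A n" and x: "x \<in> A"
    have "f x \<le> fst x * f x" using assms(2) x by simp
    also have "\<dots> \<le> (\<Sum>x\<in>A. fst x * f x)"
      by (rule member_le_sum) (use x assms(1) in auto)
    finally show "f x \<in> {0..n}" using f by (simp add: CC_def)
  next
    fix f x assume "f \<in> CC A n" "x \<notin> A" then show "f x = 0" unfolding CC_def by blast
  qed
  show "finite {f. \<forall>x. (x \<in> A \<longrightarrow> f x \<in> {0..n}) \<and> (x \<notin> A \<longrightarrow> (f x::nat) = 0)}"
    by (rule finite_set_of_finite_funs) (use assms in auto)
qed

lemma count:
  assumes "finite A" "\<forall>x\<in>A. 1 \<le> fst x"
  shows "(\<Prod>x\<in>A. inverse (1 - fps_X ^ fst x) :: real fps) $ n = real (card (CC A n))"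
  using assms
proof (induction A arbitrary: n rule: finite_induct)
  case empty
  show ?case
  proof (cases "n = 0")
    case True
    then have "CC {} n = {\<lambda>_. 0}" by (auto simp: CC_def)
    then show ?thesis using True by simp
  next
    case False
    then have "CC {} n = {}" by (auto simp: CC_def)
    then show ?thesis using False by simp
  qed
next
  case (insert a F)
  define l where "l = fst a"
  have l1: "1 \<le> l" using insert.prems by (simp add: l_def)
  have Fp: "\<forall>x\<in>F. 1 \<le> fst x" using insert.prems by simp
  define J where "J = {j\<in>{0..n}. l dvd j}"
  have "(\<Prod>x\<in>insert a F. inverse (1 - fps_X ^ fst x) :: real fps) $ n
      = (inverse (1 - fps_X ^ l) * (\<Prod>x\<in>F. inverse (1 - fps_X ^ fst x))) $ n"
    using insert.hyps by (simp add: l_def)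
  also have "\<dots> = (\<Sum>j=0..n. (if l dvd j then 1 else 0) * real (card (CC F (n - j))))"
    unfolding fps_mult_nth geom_nth[OF l1] insert.IH[OF Fp] ..
  also have "\<dots> = (\<Sum>j\<in>J. real (card (CC F (n - j))))"
    unfolding J_def by (subst sum.inter_filter) (auto intro!: sum.cong)
  also have "\<dots> = real (card (Sigma J (\<lambda>j. CC F (n - j))))"
    by (subst card_SigmaI) (auto simp: J_def CC_finite[OF insert.hyps(1) Fp])
  also have "card (Sigma J (\<lambda>j. CC F (n - j))) = card (CC (insert a F) n)"
  proof (rule bij_betw_same_card[symmetric], rule bij_betw_byWitness[where f' = "\<lambda>(j, g). g(a := j div l)"])
    have sumF: "(\<Sum>x\<in>F. fst x * (g(a := v)) x) = (\<Sum>x\<in>F. fst x * g x)" for g v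
      by (rule sum.cong) (use insert.hyps in auto)
    have sumI: "(\<Sum>x\<in>insert a F. fst x * g x) = l * g a + (\<Sum>x\<in>F. fst x * g x)" for g
      using insert.hyps by (simp add: l_def)
    show "\<forall>f\<in>CC (insert a F) n. (\<lambda>(j, g). g(a := j div l)) (l * f a, f(a := 0)) = f"
      using l1 by auto
    show "\<forall>p\<in>Sigma J (\<lambda>j. CC F (n - j)). (l * (case p of (j, g) \<Rightarrow> g(a := j div l)) a,
            (case p of (j, g) \<Rightarrow> g(a := j div l))(a := 0)) = p"
    proof
      fix p assume "p \<in> Sigma J (\<lambda>j. CC F (n - j))"
      then obtain j g where p: "p = (j, g)" "l dvd j" "g \<in> CC F (n - j)" by (auto simp: J_def)
      then have "g a = 0" using insert.hyps unfolding CC_def by blast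
      then have "g(a := 0) = g" by auto
      then show "(l * (case p of (j, g) \<Rightarrow> g(a := j div l)) a,
            (case p of (j, g) \<Rightarrow> g(a := j div l))(a := 0)) = p"
        using p by simp
    qed
    show "(\<lambda>f. (l * f a, f(a := 0))) ` CC (insert a F) n \<subseteq> Sigma J (\<lambda>j. CC F (n - j))"
    proof safe
      fix f assume f: "f \<in> CC (insert a F) n"
      then have s: "l * f a + (\<Sum>x\<in>F. fst x * f x) = n" using sumI by (simp add: CC_def)
      then show "l * f a \<in> J" by (auto simp: J_def)
      show "f(a := 0) \<in> CC F (n - l * f a)"
        using f s sumF[of f 0] by (auto simp: CC_def)
    qed
    show "(\<lambda>(j, g). g(a := j div l)) ` Sigma J (\<lambda>j. CC F (n - j)) \<subseteq> CC (insert a F) n"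
    proof safe
      fix j g assume j: "j \<in> J" and g: "g \<in> CC F (n - j)"
      have "(\<Sum>x\<in>insert a F. fst x * (g(a := j div l)) x) = l * (j div l) + (\<Sum>x\<in>F. fst x * g x)"
        unfolding sumI sumF by simp
      also have "\<dots> = j + (n - j)" using j g by (auto simp: J_def CC_def)
      also have "\<dots> = n" using j by (auto simp: J_def)
      finally show "g(a := j div l) \<in> CC (insert a F) n"
        using g by (auto simp: CC_def)
    qed
  qed
  finally show ?case .
qed

lemma AA_ok: "finite (AA N)" "\<forall>x\<in>AA N. 1 \<le> fst x"
  by (auto simp: AA_def)

lemma P_eq: assumes "k \<le> N" shows "inverse euler6 $ k = real (card (CC (AA N) k))"
  using inv_euler6[OF assms] inv_EE[of N] count[OF AA_ok, of N k] by simp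

lemma P_nonneg: "0 \<le> inverse euler6 $ k"
  using P_eq[of k k] by simp

lemma p6_eq: "p6 n = card (CC (AA n) n)"
  unfolding p6_def
proof (rule bij_betw_same_card[symmetric], rule bij_betw_byWitness[where f' = "case_prod"])
  have S: "(\<Sum>x\<in>AA n. fst x * h x) = (\<Sum>l\<in>{1..n}. \<Sum>c<6. l * h (l, c))" for h :: "nat \<times> nat \<Rightarrow> nat"
    unfolding AA_def sum.cartesian_product by (simp add: case_prod_beta)
  show "\<forall>f\<in>CC (AA n) n. case_prod (curry f) = f" by simp
  show "\<forall>g\<in>{f. (\<forall>l c. f l c \<noteq> 0 \<longrightarrow> 1 \<le> l \<and> l \<le> n \<and> c < 6) \<and>
          (\<Sum>l = 1..n. \<Sum>c<6. l * f l c) = n}. curry (case_prod g) = g" by simp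
  show "curry ` CC (AA n) n \<subseteq> {f. (\<forall>l c. f l c \<noteq> 0 \<longrightarrow> 1 \<le> l \<and> l \<le> n \<and> c < 6) \<and>
          (\<Sum>l = 1..n. \<Sum>c<6. l * f l c) = n}"
  proof (rule image_subsetI)
    fix f :: "nat \<times> nat \<Rightarrow> nat" assume f: "f \<in> CC (AA n) n"
    have z: "\<forall>x. x \<notin> AA n \<longrightarrow> f x = 0" using f unfolding CC_def by blast
    have A: "\<forall>l c. curry f l c \<noteq> 0 \<longrightarrow> 1 \<le> l \<and> l \<le> n \<and> c < 6"
    proof (intro allI impI)
      fix l c assume nz: "curry f l c \<noteq> 0"
      have "(l, c) \<in> AA n" using z nz by (metis curry_conv)
      then show "1 \<le> l \<and> l \<le> n \<and> c < 6" by (auto simp: AA_def)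
    qed
    have B: "(\<Sum>l = 1..n. \<Sum>c<6. l * curry f l c) = n" using f S[of f] by (simp add: CC_def)
    show "curry f \<in> {f. (\<forall>l c. f l c \<noteq> 0 \<longrightarrow> 1 \<le> l \<and> l \<le> n \<and> c < 6) \<and>
          (\<Sum>l = 1..n. \<Sum>c<6. l * f l c) = n}" using A B by blast
  qed
  show "case_prod ` {f. (\<forall>l c. f l c \<noteq> 0 \<longrightarrow> 1 \<le> l \<and> l \<le> n \<and> c < 6) \<and>
          (\<Sum>l = 1..n. \<Sum>c<6. l * f l c) = n} \<subseteq> CC (AA n) n"
  proof safe
    fix g :: "nat \<Rightarrow> nat \<Rightarrow> nat"
    assume g1: "\<forall>l c. g l c \<noteq> 0 \<longrightarrow> 1 \<le> l \<and> l \<le> n \<and> c < 6" and g2: "(\<Sum>l = 1..n. \<Sum>c<6. l * g l c) = n"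
    show "case_prod g \<in> CC (AA n) n"
      unfolding CC_def using g1 g2 S[of "case_prod g"] by (auto simp: AA_def)
  qed
qed

lemma P_p6: "inverse euler6 $ n = real (p6 n)"
  using P_eq[of n n] p6_eq[of n] by simp

lemma P_mono: "inverse euler6 $ k \<le> inverse euler6 $ (2 * k)"
proof (cases "k = 0")
  case True then show ?thesis by simp
next
  case False
  define N where "N = 2 * k"
  have "card (CC (AA N) k) \<le> card (CC (AA N) (2 * k))"
  proof (rule card_inj_on_le[where f = "\<lambda>h x. h x + (if x = (1, 0) then k else 0)"])
    have mem: "(1, 0) \<in> AA N" using False by (auto simp: AA_def N_def)
    show "inj_on (\<lambda>h x. h x + (if x = (1, 0) then k else 0)) (CC (AA N) k)"
    proof (rule inj_onI)
      fix h h' :: "nat \<times> nat \<Rightarrow> nat"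
      assume "(\<lambda>x. h x + (if x = (1, 0) then k else 0)) = (\<lambda>x. h' x + (if x = (1, 0) then k else 0))"
      then have "\<forall>x. h x + (if x = (1, 0) then k else 0) = h' x + (if x = (1, 0) then k else 0)"
        by metis
      then show "h = h'" by (auto intro!: ext)
    qed
    show "(\<lambda>h x. h x + (if x = (1, 0) then k else 0)) ` CC (AA N) k \<subseteq> CC (AA N) (2 * k)"
    proof safe
      fix h assume h: "h \<in> CC (AA N) k"
      have "(\<Sum>x\<in>AA N. fst x * (h x + (if x = (1, 0) then k else 0)))
          = (\<Sum>x\<in>AA N. fst x * h x + (if x = (1, 0) then k else 0))"
        by (rule sum.cong) auto
      also have "\<dots> = (\<Sum>x\<in>AA N. fst x * h x) + (\<Sum>x\<in>AA N. (if x = (1, 0) then k else 0))"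
        by (rule sum.distrib)
      also have "\<dots> = k + k" using h mem AA_ok(1)[of N] by (simp add: CC_def)
      finally have s: "(\<Sum>x\<in>AA N. fst x * (h x + (if x = (1, 0) then k else 0))) = 2 * k" by simp
      have z: "\<forall>x. x \<notin> AA N \<longrightarrow> h x = 0" using h unfolding CC_def by blast
      show "(\<lambda>x. h x + (if x = (1, 0) then k else 0)) \<in> CC (AA N) (2 * k)"
        unfolding CC_def using s z mem by auto
    qed
    show "finite (CC (AA N) (2 * k))" by (rule CC_finite[OF AA_ok])
  qed
  then show ?thesis using P_eq[of k N] P_eq[of "2*k" N] by (simp add: N_def)
qed

definition ex8 :: "real fps \<Rightarrow> real fps" where
  "ex8 f = Abs_fps (\<lambda>k. if 8 dvd k then f $ (k div 8) else 0)"

lemma sum8: "(\<Sum>i=0..(N::nat). if 8 dvd i then h i else 0) = (\<Sum>k=0..N div 8. h (8*k) :: real)"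
proof -
  have img: "(\<lambda>k. 8*k) ` {0..N div 8} = {i\<in>{0..N}. 8 dvd (i::nat)}"
  proof safe
    fix k :: nat assume "k \<in> {0..N div 8}"
    then have "8 * k \<le> 8 * (N div 8)" by simp
    also have "\<dots> \<le> N" by simp
    finally show "8 * k \<in> {0..N}" by simp
  next
    fix i :: nat assume i: "i \<in> {0..N}" "8 dvd i"
    then have "i = 8 * (i div 8)" by simp
    moreover have "i div 8 \<in> {0..N div 8}" using i by (simp add: div_le_mono)
    ultimately show "i \<in> (\<lambda>k. 8*k) ` {0..N div 8}" by blast
  qed simp
  have "(\<Sum>i=0..N. if 8 dvd i then h i else 0) = (\<Sum>i\<in>{i\<in>{0..N}. 8 dvd i}. h i)"
    by (rule sum.inter_filter[symmetric]) simp
  also have "\<dots> = (\<Sum>i\<in>(\<lambda>k. 8*k) ` {0..N div 8}. h i)" by (simp only: img)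
  also have "\<dots> = (\<Sum>k=0..N div 8. h (8*k))" by (subst sum.reindex) (auto simp: inj_on_def)
  finally show ?thesis .
qed

lemma ex8_mult: "ex8 (f * g) = ex8 f * ex8 g"
proof (rule fps_ext)
  fix k
  have "(ex8 f * ex8 g) $ k = (\<Sum>i=0..k. if 8 dvd i then f $ (i div 8) * ex8 g $ (k - i) else 0)"
    unfolding fps_mult_nth by (rule sum.cong) (auto simp: ex8_def)
  also have "\<dots> = (\<Sum>j=0..k div 8. f $ j * ex8 g $ (k - 8*j))"
    by (subst sum8) simp
  also have "\<dots> = ex8 (f * g) $ k"
  proof (cases "8 dvd k")
    case True
    have "(\<Sum>j=0..k div 8. f $ j * ex8 g $ (k - 8*j)) = (\<Sum>j=0..k div 8. f $ j * g $ (k div 8 - j))"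
    proof (rule sum.cong)
      fix j assume j: "j \<in> {0..k div 8}"
      obtain q where q: "k = 8 * q" using True by blast
      have "8 dvd (k - 8*j)" "(k - 8*j) div 8 = k div 8 - j" using q j by auto
      then show "f $ j * ex8 g $ (k - 8*j) = f $ j * g $ (k div 8 - j)" by (simp add: ex8_def)
    qed simp
    then show ?thesis using True by (simp add: ex8_def fps_mult_nth)
  next
    case False
    have "(\<Sum>j=0..k div 8. f $ j * ex8 g $ (k - 8*j)) = 0"
    proof (rule sum.neutral, intro ballI)
      fix j assume j: "j \<in> {0..k div 8}"
      then have "8 * j \<le> k" proof -
        have "8 * j \<le> 8 * (k div 8)" using j by simp
        also have "\<dots> \<le> k" by simp
        finally show ?thesis .
      qed
      then have "\<not> 8 dvd (k - 8*j)" proof (intro notI)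
        assume "8 dvd (k - 8*j)"
        then have "8 dvd (k - 8*j + 8*j)" by simp
        then show False using False \<open>8 * j \<le> k\<close> by simp
      qed
      then show "f $ j * ex8 g $ (k - 8*j) = 0" by (simp add: ex8_def)
    qed
    then show ?thesis using False by (simp add: ex8_def)
  qed
  finally show "ex8 (f * g) $ k = (ex8 f * ex8 g) $ k" by simp
qed

lemma ex8_one: "ex8 1 = 1"
  by (rule fps_ext) (auto simp: ex8_def)

lemma euler6_0: "euler6 $ 0 = 1"
  by (simp add: euler6_nth EE_def)

lemma eta6_eq: "eta6 = fls_shift (-2) (fps_to_fls (ex8 euler6))"
  by (simp add: eta6_def ex8_def)

lemma inv_eta6: "inverse eta6 = fls_shift 2 (fps_to_fls (ex8 (inverse euler6)))"
proof (rule inverse_unique)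
  have "euler6 * inverse euler6 = 1" by (rule inverse_mult_eq_1') (simp add: euler6_0)
  then have "ex8 euler6 * ex8 (inverse euler6) = 1" by (simp flip: ex8_mult add: ex8_one)
  then show "eta6 * fls_shift 2 (fps_to_fls (ex8 (inverse euler6))) = 1"
    unfolding eta6_eq fls_shifted_times_simps fls_shift_fls_shift
    by (simp flip: fls_times_fps_to_fls)
qed

lemma coef:
  "fls_nth (4800 * inverse eta6 * fps_to_fls F) m =
     (if m + 2 < 0 then 0 else 4800 * (\<Sum>k=0..nat (m+2) div 8. inverse euler6 $ k * F $ (nat (m+2) - 8*k)))"
proof -
  define Q where "Q = ex8 (inverse euler6)"
  have "4800 * inverse eta6 * fps_to_fls F = fls_shift 2 (fps_to_fls (fps_const 4800 * (Q * F)))"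
    unfolding inv_eta6 Q_def fls_shifted_times_simps
    by (simp add: fls_times_fps_to_fls mult.assoc flip: numeral_fps_const)
  moreover have "(Q * F) $ N = (\<Sum>k=0..N div 8. inverse euler6 $ k * F $ (N - 8*k))" for N
  proof -
    have "(Q * F) $ N = (\<Sum>i=0..N. if 8 dvd i then inverse euler6 $ (i div 8) * F $ (N - i) else 0)"
      unfolding fps_mult_nth by (rule sum.cong) (auto simp: Q_def ex8_def)
    also have "\<dots> = (\<Sum>k=0..N div 8. inverse euler6 $ k * F $ (N - 8*k))"
      by (subst sum8) simp
    finally show ?thesis .
  qed
  ultimately show ?thesis by simp
qed

lemma hurwitz_nonneg: "0 < N \<Longrightarrow> 0 \<le> hurwitz N"
  unfolding hurwitz_def by (auto intro!: sum_nonneg simp: class_weight_def)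

lemma cc_nat: "cc (of_nat m) r =
  (\<Sum>d\<in>{d::int. d > 0 \<and> d dvd gcd (gcd (int m) r) 2}. of_int d * hurwitz ((8*int m - r^2) div d^2))"
  by (simp add: cc_def Let_def)

lemma cc_pos0: assumes "1 \<le> m" shows "0 \<le> cc (of_nat m) 0"
  unfolding cc_nat
proof (rule sum_nonneg)
  fix d assume "d \<in> {d::int. d > 0 \<and> d dvd gcd (gcd (int m) 0) 2}"
  then have d: "d > 0" "d dvd 2" by auto
  then have "d \<le> 2" by (simp add: zdvd_imp_le)
  then have "d^2 \<le> 4" using d by (simp add: power2_eq_square mult_mono[of d 2 d 2, simplified])
  also have "4 \<le> 8 * int m - 0^2" using assms by simp
  finally have "0 < (8 * int m - 0^2) div d^2" using d by (simp add: pos_imp_zdiv_pos_iff)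
  then show "0 \<le> of_int d * hurwitz ((8 * int m - 0^2) div d^2)"
    using d hurwitz_nonneg by simp
qed

lemma cc_00: "cc 0 0 = - 1/4"
proof -
  have S: "{d::int. d > 0 \<and> d dvd gcd (gcd (int 0) 0) 2} = {1, 2}"
  proof safe
    fix d :: int assume d: "d > 0" "d dvd gcd (gcd (int 0) 0) 2" "d \<noteq> 1"
    then have "d \<le> 2" by (simp add: zdvd_imp_le)
    then show "d = 2" using d by simp
  qed auto
  have "cc 0 0 = cc (of_nat 0) 0" by simp
  also have "\<dots> = - 1/4" unfolding cc_nat S by (simp add: hurwitz_def)
  finally show ?thesis .
qed

lemma cc_1: assumes "1 \<le> m" shows "cc (of_nat m) 1 = hurwitz (8 * int m - 1)"
proof -
  have S: "{d::int. d > 0 \<and> d dvd gcd (gcd (int m) 1) 2} = {1}" by auto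
  show ?thesis unfolding cc_nat S by simp
qed

abbreviation P :: "nat \<Rightarrow> real" where "P k \<equiv> inverse euler6 $ k"

lemma beta0_sum: "beta0 n = 4800 * (\<Sum>k=0..n. P k * cc (of_nat (n - k)) 0)"
proof -
  define F0 :: "real fps" where "F0 = Abs_fps (\<lambda>\<Delta>. cc ((of_nat \<Delta> + of_int (0^2)) / 8) 0)"
  have T: "nat (8 * int n - 2 + 2) = 8 * n" by simp
  have T2: "\<not> (8 * int n - 2 + 2 < 0)" by simp
  have "beta0 n = 4800 * (\<Sum>k=0..8 * n div 8. P k * F0 $ (8 * n - 8 * k))"
    unfolding beta0_def FF_def F0_def[symmetric] coef T if_not_P[OF T2] ..
  also have "\<dots> = 4800 * (\<Sum>k=0..n. P k * cc (of_nat (n - k)) 0)"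
  proof -
    have "(of_nat (8*n - 8*k) + of_int (0^2)) / 8 = (of_nat (n - k) :: rat)" for k
    proof -
      have "8*n - 8*k = 8 * (n - k)" by (simp add: diff_mult_distrib2)
      then show ?thesis by simp
    qed
    then have "F0 $ (8 * n - 8 * k) = cc (of_nat (n - k)) 0" for k
      unfolding F0_def fps_nth_Abs_fps by metis
    then show ?thesis by simp
  qed
  finally show ?thesis .
qed

lemma part1: "- beta0 n \<le> 1200 * real (p6 n)"
proof -
  have R: "0 \<le> (\<Sum>k\<in>{0..<n}. P k * cc (of_nat (n - k)) 0)"
  proof (rule sum_nonneg)
    fix k assume "k \<in> {0..<n}"
    then have "1 \<le> n - k" by simp
    then show "0 \<le> P k * cc (of_nat (n - k)) 0" by (rule mult_nonneg_nonneg[OF P_nonneg cc_pos0])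
  qed
  have "(\<Sum>k=0..n. P k * cc (of_nat (n - k)) 0) = P n * cc 0 0 + (\<Sum>k\<in>{0..<n}. P k * cc (of_nat (n - k)) 0)"
    by (simp add: atLeastLessThanSuc_atLeastAtMost[symmetric] sum.atLeast0_lessThan_Suc)
  then have "- beta0 n = 1200 * P n - 4800 * (\<Sum>k\<in>{0..<n}. P k * cc (of_nat (n - k)) 0)"
    unfolding beta0_sum cc_00 by simp
  then show ?thesis using R P_p6[of n] by simp
qed

lemma beta1_sum: assumes "1 \<le> n"
  shows "beta1 n = 4800 * (\<Sum>k=0..n-1. P k * hurwitz (8 * int (n - k) - 1))"
proof -
  define F1 :: "real fps" where "F1 = Abs_fps (\<lambda>\<Delta>. cc ((of_nat \<Delta> + of_int (1^2)) / 8) 1)"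
  have T: "nat (8 * int n - 3 + 2) = 8 * n - 1" using assms by simp
  have T2: "\<not> (8 * int n - 3 + 2 < 0)" using assms by simp
  have T3: "(8 * n - 1) div 8 = n - 1" using assms by presburger
  have "beta1 n = 4800 * (\<Sum>k=0..n-1. P k * F1 $ (8 * n - 1 - 8 * k))"
    unfolding beta1_def FF_def F1_def[symmetric] coef T if_not_P[OF T2] T3 ..
  also have "\<dots> = 4800 * (\<Sum>k=0..n-1. P k * hurwitz (8 * int (n - k) - 1))"
  proof -
    have "F1 $ (8 * n - 1 - 8 * k) = hurwitz (8 * int (n - k) - 1)" if k: "k \<in> {0..n-1}" for k
    proof -
      have k1: "1 \<le> n - k" using k assms by auto
      have "(of_nat (8 * n - 1 - 8 * k) + of_int (1^2)) / 8 = (of_nat (n - k) :: rat)"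
      proof -
        have "8 * n - 1 - 8 * k = 8 * (n - k) - 1" by (simp add: diff_mult_distrib2)
        then have "of_nat (8 * n - 1 - 8 * k) = (8 * of_nat (n - k) - 1 :: rat)"
          using k1 by (simp add: of_nat_diff)
        then show ?thesis by simp
      qed
      then have "F1 $ (8 * n - 1 - 8 * k) = cc (of_nat (n - k)) 1"
        unfolding F1_def fps_nth_Abs_fps by metis
      then show ?thesis using cc_1[OF k1] by simp
    qed
    then show ?thesis by (metis (no_types, lifting) sum.cong)
  qed
  finally show ?thesis .
qed

lemma gamma_sum: assumes "1 \<le> n"
  shows "gamma_coef (2 * n) = 4800 * (\<Sum>k=0..2*n-1. P k * hurwitz (4 * int (2*n - 1 - k) + 3))"
proof -
  define H :: "real fps" where
    "H = Abs_fps (\<lambda>k. if k mod 8 = 6 then hurwitz (4 * int (k div 8) + 3) else 0)"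
  have T: "nat (8 * int (2 * n) - 4 + 2) = 16 * n - 2" using assms by simp
  have T2: "\<not> (8 * int (2 * n) - 4 + 2 < 0)" using assms by simp
  have T3: "(16 * n - 2) div 8 = 2 * n - 1" using assms by presburger
  have "gamma_coef (2 * n) = 4800 * (\<Sum>k=0..2*n-1. P k * H $ (16 * n - 2 - 8 * k))"
    unfolding gamma_coef_def HH1_def H_def[symmetric] coef T if_not_P[OF T2] T3 ..
  also have "\<dots> = 4800 * (\<Sum>k=0..2*n-1. P k * hurwitz (4 * int (2*n - 1 - k) + 3))"
  proof -
    have "H $ (16 * n - 2 - 8 * k) = hurwitz (4 * int (2*n - 1 - k) + 3)" if k: "k \<in> {0..2*n-1}" for k
    proof -
      have e: "16 * n - 2 - 8 * k = 8 * (2*n - 1 - k) + 6" using k assms by auto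
      show ?thesis unfolding H_def fps_nth_Abs_fps e by simp
    qed
    then show ?thesis by (metis (no_types, lifting) sum.cong)
  qed
  finally show ?thesis .
qed

lemma part2: "beta1 n \<le> gamma_coef (2 * n)"
proof (cases "n = 0")
  case True
  then show ?thesis by (simp add: beta1_def gamma_coef_def FF_def HH1_def coef)
next
  case False
  then have n1: "1 \<le> n" by simp
  define h where "h k = hurwitz (4 * int (2*n - 1 - k) + 3)" for k
  have h0: "0 \<le> h k" for k unfolding h_def by (rule hurwitz_nonneg) simp
  have "(\<Sum>k=0..n-1. P k * hurwitz (8 * int (n - k) - 1)) \<le> (\<Sum>k=0..n-1. P (2*k) * h (2*k))"
  proof (rule sum_mono)
    fix k assume k: "k \<in> {0..n-1}"
    have "4 * int (2*n - 1 - 2*k) + 3 = 8 * int (n - k) - 1" using k n1 by auto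
    then have "h (2*k) = hurwitz (8 * int (n - k) - 1)" by (simp add: h_def)
    then show "P k * hurwitz (8 * int (n - k) - 1) \<le> P (2*k) * h (2*k)"
      using P_mono[of k] h0[of "2*k"] by (simp add: mult_right_mono)
  qed
  also have "\<dots> = (\<Sum>j\<in>(\<lambda>k. 2*k) ` {0..n-1}. P j * h j)"
    by (subst sum.reindex) (auto simp: inj_on_def)
  also have "\<dots> \<le> (\<Sum>j=0..2*n-1. P j * h j)"
    by (rule sum_mono2) (use n1 in \<open>auto intro!: mult_nonneg_nonneg P_nonneg h0\<close>)
  finally have "(\<Sum>k=0..n-1. P k * hurwitz (8 * int (n - k) - 1)) \<le> (\<Sum>j=0..2*n-1. P j * h j)" .
  then show ?thesis unfolding beta1_sum[OF n1] gamma_sum[OF n1] h_def by simp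
qed

theorem lemma5p2:
  fixes n :: nat
  shows "- beta0 n \<le> 1200 * real (p6 n) \<and> beta1 n \<le> gamma_coef (2 * n)"
  using part1 part2 by blast

end
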